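(* Let $n\ge1$ be an integer and, for $j=0,\dots,n$, let $f_{2j+1}$ be a homogeneous polynomial of degree $2j+1$ with complex coefficients in the four entries of a $2\times2$ matrix, not divisible by $\det$ (viewed as a degree-$2$ polynomial). Let $S_{2n+1}\subset\mathbb{K}P^3$ be the surface defined by $F_{2n+1}(A)=0$, where $$F_{2n+1}(A)=\sum_{j=0}^n t^{-j(j+1)}(\det A)^{n-j}f_{2j+1}(A).$$ Let $C_{2j+1}=\{[B]_{\mathbb{C}^*}\in Q(\mathbb{C}): f_{2j+1}(B)=0\}$, and let $H=\{[B]_{\mathbb{C}^*}\in\mathbb{C}P^3: f_1(B)=0,\ \det B\neq0\}$. For $j=1,\dots,n$ let $\sigma_j$ be the section of $\mathcal{S}$ over $Q(\mathbb{C})\setminus(C_{2j-1}\cup C_{2j+1})$ given by $\sigma_j([B]_{\mathbb{C}^*})=\left[\sqrt{-\tfrac{f_{2j-1}(B)}{f_{2j+1}(B)}}\,B\right]_{\mathbb{R}^*}$. Then $$\operatorname{VAL}(S_{2n+1})\subset\Sigma_\infty\cup\Sigma_R\cup\Sigma_C\cup\Sigma_0,$$ where $\Sigma_\infty=\{\infty\}\times C_{2n+1}$, $\Sigma_R=\bigcup_{j=0}^{n-1}((j,j+1)\cap\mathbb{Q})\times\mathcal{S}|_{C_{2j+1}}\ \cup\ ((n,\infty)\cap\mathbb{Q})\times\mathcal{S}|_{C_{2n+1}}$, $\Sigma_C=\bigcup_{j=1}^n\{j\}\times\Big(\sigma_j\big(Q(\mathbb{C})\setminus(C_{2j-1}\cup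 C_{2j+1})\big)\cup\mathcal{S}|_{C_{2j-1}\cap C_{2j+1}}\Big)$, and $\Sigma_0=\{0\}\times\varkappa^\circ(H)$.
   Context: Matrices and classes. For a $2\times 2$ matrix $B=\begin{pmatrix}a&b\\ c&d\end{pmatrix}$ write $B^{\mathbf c}=\begin{pmatrix}d&-b\\ -c&a\end{pmatrix}$; $B^*$ is the conjugate transpose. $\mathbb{C}P^3$ is the projectivization of the space of complex $2\times2$ matrices; $[B]_{\mathbb{C}^*}$ is the class of a nonzero matrix up to nonzero complex scalars, $[B]_{\mathbb{R}^*}$ its class up to nonzero real scalars. $Q(\mathbb{C})=\{[B]_{\mathbb{C}^*}:\det B=0\}$, $PSL_2(\mathbb{C})=\mathbb{C}P^3\setminus Q(\mathbb{C})$, $PSU(2)=\{[U]_{\mathbb{C}^*}:U\in SU(2)\}$. The spherical coamoeba map $\varkappa^\circ\colon PSL_2(\mathbb{C})\to PSU(2)$ sends $[A]_{\mathbb{C}^*}$ with $\det A=1$ to $[A+(A^{\mathbf c})^*]_{\mathbb{R}^*}$ (the class of the unitary factor of the polar decomposition of $A$). Circle bundle. $\mathcal{S}$ is the set of classes $[B]_{\mathbb{R}^*}$ of complex $2\times2$ matrices of rank one, with projection $\pi\colon\mathcal{S}\to Q(\mathbb{C})$, $[B]_{\mathbb{R}^*}\mapsto[B]_{\mathbb{C}^*}$; for $Z\subset Q(\mathbb{C})$, $\mathcal{S}|_Z=\pi^{-1}(Z)$; a section over $Z$ is a map $\sigma\colon Z\to\mathcal{S}$ with $\pi\circ\sigma=\mathrm{id}_Z$.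 Cone notation (subsets of $\mathbb{C}P^3$). For $I\subset(0,\infty)$ and $T\subset\mathcal{S}$, $I\times T:=\{[e^\alpha B+e^{-\alpha}(B^{\mathbf c})^*]_{\mathbb{C}^*}:\alpha\in I,\ [B]_{\mathbb{R}^*}\in T\}$; for $X\subset PSU(2)$, $\{0\}\times X:=X$; for $Y\subset Q(\mathbb{C})$, $\{\infty\}\times Y:=Y$. Field and valuation. $\mathbb{K}$ is the field of Puiseux series in $t$ (with $t\to\infty$) with complex coefficients, i.e. series $\sum_q a_q t^q$ with $a_q\in\mathbb{C}$ and exponents in $\frac1N\mathbb{Z}$ for some $N\ge1$, bounded above. $\mathbb{K}P^3$ is the projectivization of the space of $2\times 2$ matrices over $\mathbb{K}$. Every nonzero matrix $A$ over $\mathbb{K}$ can be written uniquely as $A=t^\alpha B+(\text{terms with exponents}<\alpha)$ with $\alpha\in\mathbb{Q}$ and $B$ a nonzero complex matrix. The map $\operatorname{VAL}\colon\mathbb{K}P^3\to\mathbb{C}P^3$ is: if $\det A=0$, $\operatorname{VAL}([A])=[B]_{\mathbb{C}^*}$; if $\det A\ne0$, rescale $A$ so that $\det A=1$ (then $\alpha\ge0$), and set $\operatorname{VAL}([A])=[e^\alpha B+e^{-\alpha}(B^{\mathbf c})^*]_{\mathbb{C}^*}$. *)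

theory Defs
  imports Complex_Main "HOL-Computational_Algebra.Formal_Laurent_Series"
begin

text \<open>A 2x2 matrix (a b; c d) is written M2 a b c d.\<close>
datatype 'a m2 = M2 'a 'a 'a 'a

fun m2det :: "'a::comm_ring_1 m2 \<Rightarrow> 'a" where
  "m2det (M2 a b c d) = a * d - b * c"

fun m2adj :: "'a::comm_ring_1 m2 \<Rightarrow> 'a m2" where
  "m2adj (M2 a b c d) = M2 d (- b) (- c) a"

fun m2ct :: "complex m2 \<Rightarrow> complex m2" where
  "m2ct (M2 a b c d) = M2 (cnj a) (cnj c) (cnj b) (cnj d)"

fun m2add :: "'a::plus m2 \<Rightarrow> 'a m2 \<Rightarrow> 'a m2" where
  "m2add (M2 a b c d) (M2 a' b' c' d') = M2 (a + a') (b + b') (c + c') (d + d')"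

fun m2scale :: "'a::times \<Rightarrow> 'a m2 \<Rightarrow> 'a m2" where
  "m2scale s (M2 a b c d) = M2 (s * a) (s * b) (s * c) (s * d)"

fun m2map :: "('a \<Rightarrow> 'b) \<Rightarrow> 'a m2 \<Rightarrow> 'b m2" where
  "m2map g (M2 a b c d) = M2 (g a) (g b) (g c) (g d)"

fun m2entries :: "'a m2 \<Rightarrow> 'a set" where
  "m2entries (M2 a b c d) = {a, b, c, d}"

text \<open>Points of CP^3 are represented by nonzero complex matrices; two
  representatives give the same point iff they differ by a nonzero complex scalar.\<close>
definition proj_eq :: "complex m2 \<Rightarrow> complex m2 \<Rightarrow> bool" where
  "proj_eq V W \<longleftrightarrow> (\<exists>c. c \<noteq> 0 \<and> V = m2scale c W)"

text \<open>A polynomial in the entries a,b,c,d is a coefficient function on exponent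
  vectors (i,j,k,l) (monomial a^i b^j c^k d^l).\<close>
type_synonym poly4 = "nat \<times> nat \<times> nat \<times> nat \<Rightarrow> complex"

fun tdeg :: "nat \<times> nat \<times> nat \<times> nat \<Rightarrow> nat" where
  "tdeg (i, j, k, l) = i + j + k + l"

definition hom_poly :: "nat \<Rightarrow> poly4 \<Rightarrow> bool" where
  "hom_poly d p \<longleftrightarrow> (\<forall>e. p e \<noteq> 0 \<longrightarrow> tdeg e = d)"

definition mons :: "nat \<Rightarrow> (nat \<times> nat \<times> nat \<times> nat) set" where
  "mons d = {e. tdeg e = d}"

fun heval :: "nat \<Rightarrow> (complex \<Rightarrow> 'a::comm_ring_1) \<Rightarrow> poly4 \<Rightarrow> 'a m2 \<Rightarrow> 'a" where
  "heval d emb p (M2 a b c e) =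
     (\<Sum>(i, j, k, l)\<in>mons d. emb (p (i, j, k, l)) * a ^ i * b ^ j * c ^ k * e ^ l)"

fun pmul :: "poly4 \<Rightarrow> poly4 \<Rightarrow> poly4" where
  "pmul p q (i, j, k, l) =
     (\<Sum>(a, b, c, d)\<in>{..i} \<times> ({..j} \<times> ({..k} \<times> {..l})).
        p (a, b, c, d) * q (i - a, j - b, k - c, l - d))"

definition detp :: poly4 where
  "detp e = (if e = (1, 0, 0, 1) then 1 else if e = (0, 1, 1, 0) then -1 else 0)"

definition det_dvd :: "poly4 \<Rightarrow> bool" where
  "det_dvd p \<longleftrightarrow> (\<exists>g. finite {e. g e \<noteq> 0} \<and> p = pmul detp g)"

text \<open>For N \<ge> 1, the Laurent series field C((s)) is identified with the subfield of
  Puiseux series with exponents in (1/N)Z via s = t^(-1/N): the Laurent series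
  with coefficients c_k represents sum_k c_k t^(-k/N) (exponents bounded above,
  as required for t \<rightarrow> \<infinity>). Every finite set of Puiseux series lies in one such
  subfield, so a matrix over K is given by some N \<ge> 1 and a matrix over
  complex fls.\<close>

text \<open>Leading form of a nonzero matrix A: A = t^alpha B + lower order terms.
  The leading s-order is the minimal subdegree among the nonzero entries.\<close>
definition lead_ord :: "complex fls m2 \<Rightarrow> int" where
  "lead_ord A = Min (fls_subdegree ` {x \<in> m2entries A. x \<noteq> 0})"

definition lead_mat :: "complex fls m2 \<Rightarrow> complex m2" where
  "lead_mat A = m2map (\<lambda>x. fls_nth x (lead_ord A)) A"

definition lead_exp :: "nat \<Rightarrow> complex fls m2 \<Rightarrow> real" where
  "lead_exp N A = - real_of_int (lead_ord A) / real N"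

definition cone_pt :: "real \<Rightarrow> complex m2 \<Rightarrow> complex m2" where
  "cone_pt \<alpha> B = m2add (m2scale (complex_of_real (exp \<alpha>)) B)
                         (m2scale (complex_of_real (exp (- \<alpha>))) (m2ct (m2adj B)))"

text \<open>VAL of the class of A, for a representative A with det A = 0 or det A = 1
  (the normalisation used in the definition of VAL).\<close>
definition VAL_rep :: "nat \<Rightarrow> complex fls m2 \<Rightarrow> complex m2" where
  "VAL_rep N A = (if m2det A = 0 then lead_mat A
                  else cone_pt (lead_exp N A) (lead_mat A))"

text \<open>F_{2n+1}(A) = sum_j t^(-j(j+1)) (det A)^(n-j) f_{2j+1}(A), where f j is f_{2j+1}
  and t^(-j(j+1)) = s^(N j (j+1)).\<close>
definition F_eval :: "nat \<Rightarrow> (nat \<Rightarrow> poly4) \<Rightarrow> nat \<Rightarrow> complex fls m2 \<Rightarrow> complex fls" where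
  "F_eval n f N A = (\<Sum>j\<le>n. fls_X ^ (N * j * (j + 1)) * (m2det A) ^ (n - j)
                              * heval (2 * j + 1) fls_const (f j) A)"

definition Qset :: "complex m2 \<Rightarrow> bool" where
  "Qset B \<longleftrightarrow> B \<noteq> M2 0 0 0 0 \<and> m2det B = 0"

text \<open>C_{2j+1} (with d = 2j+1, p = f_{2j+1}); also the fibre of S over it
  (rank-one matrices B whose class lies in it).\<close>
definition Cset :: "nat \<Rightarrow> poly4 \<Rightarrow> complex m2 \<Rightarrow> bool" where
  "Cset d p B \<longleftrightarrow> Qset B \<and> heval d id p B = 0"

definition Sigma_inf :: "nat \<Rightarrow> (nat \<Rightarrow> poly4) \<Rightarrow> complex m2 set" where
  "Sigma_inf n f = {V. Cset (2 * n + 1) (f n) V}"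

definition Sigma_R :: "nat \<Rightarrow> (nat \<Rightarrow> poly4) \<Rightarrow> complex m2 set" where
  "Sigma_R n f = {V. \<exists>W. proj_eq V W \<and>
     ((\<exists>j<n. \<exists>\<alpha>::rat. real j < real_of_rat \<alpha> \<and> real_of_rat \<alpha> < real j + 1 \<and>
        (\<exists>B. Cset (2 * j + 1) (f j) B \<and> W = cone_pt (real_of_rat \<alpha>) B))
      \<or> (\<exists>\<alpha>::rat. real n < real_of_rat \<alpha> \<and>
        (\<exists>B. Cset (2 * n + 1) (f n) B \<and> W = cone_pt (real_of_rat \<alpha>) B)))}"

text \<open>sigma_j([B]) = [sqrt(-f_{2j-1}(B)/f_{2j+1}(B)) B]_{R*}; f (j-1) is f_{2j-1}.\<close>
definition Sigma_C :: "nat \<Rightarrow> (nat \<Rightarrow> poly4) \<Rightarrow> complex m2 set" where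
  "Sigma_C n f = {V. \<exists>W. proj_eq V W \<and> (\<exists>j\<in>{1..n}.
     (\<exists>B. Qset B \<and> \<not> Cset (2 * j - 1) (f (j - 1)) B \<and> \<not> Cset (2 * j + 1) (f j) B \<and>
        W = cone_pt (real j)
              (m2scale (csqrt (- heval (2 * j - 1) id (f (j - 1)) B
                                / heval (2 * j + 1) id (f j) B)) B))
     \<or> (\<exists>B. Cset (2 * j - 1) (f (j - 1)) B \<and> Cset (2 * j + 1) (f j) B \<and>
        W = cone_pt (real j) B))}"

text \<open>{0} x kappa(H), H = {[B] : f_1(B) = 0, det B \<noteq> 0}; kappa([A]) = [A + (A^c)^*]
  for det A = 1.\<close>
definition Sigma_0 :: "(nat \<Rightarrow> poly4) \<Rightarrow> complex m2 set" where
  "Sigma_0 f = {V. \<exists>B. m2det B \<noteq> 0 \<and> heval 1 id (f 0) B = 0 \<and>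
     (\<exists>\<mu> A. A = m2scale \<mu> B \<and> m2det A = 1 \<and> proj_eq V (m2add A (m2ct (m2adj A))))}"

end

theory Submission
  imports Defs
begin

unbundle fps_syntax

definition lowf :: "int \<Rightarrow> complex fls \<Rightarrow> bool" where
  "lowf m x \<longleftrightarrow> (\<forall>k<m. x $$ k = 0)"

lemma lowf_iff: "lowf m x \<longleftrightarrow> (x = 0 \<or> m \<le> fls_subdegree x)"
proof
  assume "lowf m x"
  show "x = 0 \<or> m \<le> fls_subdegree x"
  proof (rule ccontr)
    assume "\<not> (x = 0 \<or> m \<le> fls_subdegree x)"
    then have "x \<noteq> 0" "fls_subdegree x < m" by auto
    with \<open>lowf m x\<close> show False unfolding lowf_def by auto
  qed
next
  assume "x = 0 \<or> m \<le> fls_subdegree x"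
  then show "lowf m x" unfolding lowf_def by auto
qed

lemma lowf_mono: "lowf a x \<Longrightarrow> b \<le> a \<Longrightarrow> lowf b x"
  unfolding lowf_def by auto

lemma lowf_mult:
  assumes "lowf a x" "lowf b y"
  shows "lowf (a + b) (x * y) \<and> (x * y) $$ (a + b) = x $$ a * y $$ b"
proof (cases "x = 0 \<or> y = 0")
  case True
  then show ?thesis unfolding lowf_def by auto
next
  case False
  then have xs: "a \<le> fls_subdegree x" and ys: "b \<le> fls_subdegree y"
    using assms lowf_iff by auto
  have l: "lowf (a + b) (x * y)" unfolding lowf_def
    using fls_times_nth_eq0[of _ x y] xs ys by auto
  show ?thesis
  proof (cases "a = fls_subdegree x \<and> b = fls_subdegree y")
    case True
    then show ?thesis using l fls_times_nth(4)[of x y "a+b"] by simp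
  next
    case F2: False
    then have "a + b < fls_subdegree x + fls_subdegree y" using xs ys by auto
    then have "(x * y) $$ (a + b) = 0" by (rule fls_times_nth_eq0)
    moreover have "x $$ a = 0 \<or> y $$ b = 0" using F2 xs ys by auto
    ultimately show ?thesis using l by auto
  qed
qed

lemma lowf_pow:
  assumes "lowf a x"
  shows "lowf (int k * a) (x ^ k) \<and> (x ^ k) $$ (int k * a) = (x $$ a) ^ k"
proof (induction k)
  case 0
  then show ?case unfolding lowf_def by simp
next
  case (Suc k)
  have "lowf (a + int k * a) (x * x ^ k) \<and> (x * x ^ k) $$ (a + int k * a) = x $$ a * (x ^ k) $$ (int k * a)"
    using lowf_mult[OF assms] Suc by blast
  moreover have "a + int k * a = int (Suc k) * a" by (simp add: algebra_simps)
  ultimately show ?case using Suc by simp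
qed

lemma lowf_sum:
  assumes "finite S" "\<forall>i\<in>S. lowf a (g i)"
  shows "lowf a (sum g S) \<and> (sum g S) $$ a = (\<Sum>i\<in>S. g i $$ a)"
  using assms unfolding lowf_def by (auto simp: fls_nth_sum)

lemma lowf_const: "lowf 0 (fls_const c)"
  unfolding lowf_def by simp

lemma lowf_Xpow: "lowf (int k) (fls_X ^ k) \<and> (fls_X ^ k :: complex fls) $$ int k = 1"
  unfolding lowf_def by simp

lemma finite_mons: "finite (mons d)"
proof -
  have "mons d \<subseteq> {..d} \<times> {..d} \<times> {..d} \<times> {..d}"
    unfolding mons_def by auto
  then show ?thesis by (rule finite_subset) auto
qed

lemma heval_low:
  assumes "lowf m a" "lowf m b" "lowf m c" "lowf m e"
  shows "lowf (int d * m) (heval d fls_const p (M2 a b c e)) \<and>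
    heval d fls_const p (M2 a b c e) $$ (int d * m) = heval d id p (M2 (a$$m) (b$$m) (c$$m) (e$$m))"
proof -
  have tm: "lowf (int d * m) (fls_const (p (i,j,k,l)) * a ^ i * b ^ j * c ^ k * e ^ l) \<and>
     (fls_const (p (i,j,k,l)) * a ^ i * b ^ j * c ^ k * e ^ l) $$ (int d * m)
       = p (i,j,k,l) * (a$$m) ^ i * (b$$m) ^ j * (c$$m) ^ k * (e$$m) ^ l"
    if "(i,j,k,l) \<in> mons d" for i j k l
  proof -
    have dd: "int d * m = 0 + int i * m + int j * m + int k * m + int l * m"
    proof -
      have "d = i + j + k + l" using that unfolding mons_def by simp
      then have "int d = int i + int j + int k + int l" by simp
      then show ?thesis by (simp add: algebra_simps)
    qed
    have p1: "lowf (0 + int i * m) (fls_const (p (i,j,k,l)) * a ^ i) \<and> (fls_const (p (i,j,k,l)) * a ^ i) $$ (0 + int i * m) = p (i,j,k,l) * (a$$m) ^ i"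
      using lowf_mult[OF lowf_const conjunct1[OF lowf_pow[OF assms(1)]]] lowf_pow[OF assms(1)] by simp
    have p2: "lowf (0 + int i * m + int j * m) (fls_const (p (i,j,k,l)) * a ^ i * b ^ j) \<and> (fls_const (p (i,j,k,l)) * a ^ i * b ^ j) $$ (0 + int i * m + int j * m) = p (i,j,k,l) * (a$$m) ^ i * (b$$m)^j"
      using lowf_mult[OF conjunct1[OF p1] conjunct1[OF lowf_pow[OF assms(2)]]] p1 lowf_pow[OF assms(2)] by simp
    have p3: "lowf (0 + int i * m + int j * m + int k * m) (fls_const (p (i,j,k,l)) * a ^ i * b ^ j * c ^ k) \<and> (fls_const (p (i,j,k,l)) * a ^ i * b ^ j * c ^ k) $$ (0 + int i * m + int j * m + int k * m) = p (i,j,k,l) * (a$$m) ^ i * (b$$m)^j * (c$$m)^k"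
      using lowf_mult[OF conjunct1[OF p2] conjunct1[OF lowf_pow[OF assms(3)]]] p2 lowf_pow[OF assms(3)] by simp
    have p4: "lowf (0 + int i * m + int j * m + int k * m + int l * m) (fls_const (p (i,j,k,l)) * a ^ i * b ^ j * c ^ k * e ^ l) \<and> (fls_const (p (i,j,k,l)) * a ^ i * b ^ j * c ^ k * e ^ l) $$ (0 + int i * m + int j * m + int k * m + int l * m) = p (i,j,k,l) * (a$$m) ^ i * (b$$m)^j * (c$$m)^k * (e$$m)^l"
      using lowf_mult[OF conjunct1[OF p3] conjunct1[OF lowf_pow[OF assms(4)]]] p3 lowf_pow[OF assms(4)] by simp
    show ?thesis using p4 dd by simp
  qed
  have all: "\<forall>x\<in>mons d. lowf (int d * m) ((\<lambda>(i, j, k, l). fls_const (p (i, j, k, l)) * a ^ i * b ^ j * c ^ k * e ^ l) x)"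
    using tm by auto
  note s = lowf_sum[OF finite_mons all]
  have "(\<Sum>x\<in>mons d. ((\<lambda>(i, j, k, l). fls_const (p (i, j, k, l)) * a ^ i * b ^ j * c ^ k * e ^ l) x) $$ (int d * m))
     = (\<Sum>x\<in>mons d. (\<lambda>(i, j, k, l). p (i, j, k, l) * (a$$m) ^ i * (b$$m) ^ j * (c$$m) ^ k * (e$$m) ^ l) x)"
    by (rule sum.cong) (use tm in auto)
  then show ?thesis using s by simp
qed

lemma det_low:
  assumes "lowf m a" "lowf m b" "lowf m c" "lowf m e"
  shows "lowf (2 * m) (m2det (M2 a b c e)) \<and> m2det (M2 a b c e) $$ (2 * m) = m2det (M2 (a$$m) (b$$m) (c$$m) (e$$m))"
proof -
  have 1: "lowf (m + m) (a * e) \<and> (a * e) $$ (m + m) = a $$ m * e $$ m" using lowf_mult assms by blast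
  have 2: "lowf (m + m) (b * c) \<and> (b * c) $$ (m + m) = b $$ m * c $$ m" using lowf_mult assms by blast
  have "m + m = 2 * m" by simp
  then show ?thesis using 1 2 unfolding lowf_def by auto
qed

lemma lead_props:
  assumes "M2 a b c e \<noteq> M2 0 0 0 0"
  defines "m \<equiv> lead_ord (M2 a b c e)"
  shows "lowf m a \<and> lowf m b \<and> lowf m c \<and> lowf m e \<and> lead_mat (M2 a b c e) = M2 (a$$m) (b$$m) (c$$m) (e$$m)
     \<and> M2 (a$$m) (b$$m) (c$$m) (e$$m) \<noteq> M2 0 0 0 0"
proof -
  define S where "S = {x \<in> {a,b,c,e}. x \<noteq> 0}"
  have fin: "finite (fls_subdegree ` S)" unfolding S_def by auto
  have ne: "fls_subdegree ` S \<noteq> {}" using assms(1) unfolding S_def by auto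
  have m: "m = Min (fls_subdegree ` S)" unfolding m_def lead_ord_def S_def by simp
  have lw: "lowf m x" if "x \<in> {a,b,c,e}" for x
  proof (cases "x = 0")
    case True then show ?thesis unfolding lowf_def by simp
  next
    case False
    then have "fls_subdegree x \<in> fls_subdegree ` S" using that unfolding S_def by auto
    then have "m \<le> fls_subdegree x" using m fin by simp
    then show ?thesis using lowf_iff by auto
  qed
  have "m \<in> fls_subdegree ` S" using m fin ne by simp
  then obtain x where x: "x \<in> S" "fls_subdegree x = m" by auto
  then have "x $$ m \<noteq> 0" unfolding S_def by auto
  moreover have "x \<in> {a,b,c,e}" using x unfolding S_def by auto
  ultimately have "M2 (a$$m) (b$$m) (c$$m) (e$$m) \<noteq> M2 0 0 0 0" by auto
  moreover have "lead_mat (M2 a b c e) = M2 (a$$m) (b$$m) (c$$m) (e$$m)"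
    unfolding lead_mat_def m_def by simp
  ultimately show ?thesis using lw by auto
qed

lemma pick_min:
  assumes "\<forall>j\<le>n. lowf (E j) (T j) \<and> T j $$ E j = g j" "\<forall>j\<le>n. e \<le> E j"
  shows "(\<Sum>j\<le>n. T j) $$ e = (\<Sum>j\<le>n. if E j = e then g j else 0)"
  unfolding fls_nth_sum
proof (rule sum.cong)
  fix j assume "j \<in> {..n}"
  then show "T j $$ e = (if E j = e then g j else 0)"
    using assms unfolding lowf_def by (cases "E j = e") auto
qed simp

lemma m2scale_1: "m2scale (1::complex) X = X" by (cases X) simp

lemma proj_eq_refl: "proj_eq V V"
  unfolding proj_eq_def using m2scale_1 by (intro exI[of _ 1]) simp

lemma int_cons_nonneg: "(x::int) * (x + 1) \<ge> 0"
proof (cases "x \<ge> 0")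
  case True then show ?thesis by simp
next
  case False then have "x + 1 \<le> 0" by simp
  then show ?thesis using False mult_nonpos_nonpos[of x "x+1"] by simp
qed

lemma int_cons_pos: "(x::int) \<noteq> 0 \<Longrightarrow> x \<noteq> -1 \<Longrightarrow> x * (x + 1) > 0"
proof (cases "x > 0")
  case True then show ?thesis by simp
next
  case False
  assume "x \<noteq> 0" "x \<noteq> -1"
  then have "x < 0" "x + 1 < 0" using False by auto
  then show ?thesis using mult_neg_neg by blast
qed

theorem theorem5p2:
  fixes n N :: nat and f :: "nat \<Rightarrow> poly4" and A :: "complex fls m2"
  assumes "n \<ge> 1"
    and "\<forall>j\<le>n. hom_poly (2 * j + 1) (f j) \<and> \<not> det_dvd (f j)"
    and "N \<ge> 1"
    and "A \<noteq> M2 0 0 0 0"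
    and "F_eval n f N A = 0"
    and "m2det A = 0 \<or> m2det A = 1"
  shows "VAL_rep N A \<in> Sigma_inf n f \<union> Sigma_R n f \<union> Sigma_C n f \<union> Sigma_0 f"
proof -
  obtain a b c e where A: "A = M2 a b c e" by (cases A)
  define m where "m = lead_ord A"
  define B where "B = M2 (a$$m) (b$$m) (c$$m) (e$$m)"
  have LP: "lowf m a \<and> lowf m b \<and> lowf m c \<and> lowf m e \<and> lead_mat A = B \<and> B \<noteq> M2 0 0 0 0"
    using lead_props[of a b c e] assms(4) unfolding A m_def B_def by simp
  then have lm: "lead_mat A = B" and Bnz: "B \<noteq> M2 0 0 0 0" by auto
  have hl: "lowf (int d * m) (heval d fls_const p A) \<and> heval d fls_const p A $$ (int d * m) = heval d id p B" for d p
    using heval_low[of m a b c e d p] LP unfolding A B_def by simp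
  have dl: "lowf (2 * m) (m2det A) \<and> m2det A $$ (2 * m) = m2det B"
    using det_low[of m a b c e] LP unfolding A B_def by simp
  define g where "g j = heval (2 * j + 1) id (f j) B" for j
  have QB: "Qset B \<longleftrightarrow> m2det B = 0" using Bnz unfolding Qset_def by simp
  have Npos: "N > 0" using assms(3) by simp
  consider (d0) "m2det A = 0" | (d1) "m2det A = 1" using assms(6) by blast
  then show ?thesis
  proof cases
    case d0
    have "F_eval n f N A = (\<Sum>j\<le>n. if j = n then fls_X ^ (N * n * (n + 1)) * heval (2 * n + 1) fls_const (f n) A else 0)"
      unfolding F_eval_def d0 by (rule sum.cong) auto
    then have "fls_X ^ (N * n * (n + 1)) * heval (2 * n + 1) fls_const (f n) A = 0"
      using assms(5) by simp
    then have "heval (2 * n + 1) fls_const (f n) A = 0" by simp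
    then have gn: "g n = 0" using hl[of "2*n+1" "f n"] unfolding g_def by simp
    have dB: "m2det B = 0" using dl d0 by simp
    have "VAL_rep N A = B" unfolding VAL_rep_def using d0 lm by simp
    moreover have "B \<in> Sigma_inf n f" unfolding Sigma_inf_def Cset_def using QB dB gn g_def by simp
    ultimately show ?thesis by simp
  next
    case d1
    define T where "T j = fls_X ^ (N * j * (j + 1)) * heval (2 * j + 1) fls_const (f j) A" for j
    define E where "E j = int N * int j * (int j + 1) + (2 * int j + 1) * m" for j
    have TE: "\<forall>j\<le>n. lowf (E j) (T j) \<and> T j $$ E j = g j"
    proof (intro allI impI)
      fix j
      have "E j = int (N * j * (j + 1)) + int (2 * j + 1) * m" unfolding E_def by (simp add: algebra_simps)
      then show "lowf (E j) (T j) \<and> T j $$ E j = g j"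
        using lowf_mult[OF conjunct1[OF lowf_Xpow[of "N * j * (j + 1)"]] conjunct1[OF hl[of "2*j+1" "f j"]]]
          lowf_Xpow[of "N * j * (j + 1)"] hl[of "2*j+1" "f j"] unfolding T_def g_def by simp
    qed
    have FT: "(\<Sum>j\<le>n. T j) = 0" using assms(5) unfolding F_eval_def T_def d1 by simp
    have VB: "VAL_rep N A = cone_pt (- real_of_int m / real N) B"
      unfolding VAL_rep_def lead_exp_def using d1 lm m_def by simp
    have mle: "m \<le> 0"
    proof (rule ccontr)
      assume "\<not> m \<le> 0"
      then have "0 < 2 * m" by simp
      moreover have "\<forall>k<2 * m. (1::complex fls) $$ k = 0" using dl d1 unfolding lowf_def by simp
      ultimately have "(1::complex fls) $$ 0 = 0" by blast
      then show False by simp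
    qed
    consider (m0) "m = 0" | (mneg) "m < 0" using mle by linarith
    then show ?thesis
    proof cases
      case m0
      have dB: "m2det B = 1" using dl d1 m0 by simp
      have "(\<Sum>j\<le>n. T j) $$ 0 = (\<Sum>j\<le>n. if E j = 0 then g j else 0)"
        by (rule pick_min[OF TE]) (simp add: E_def m0)
      also have "\<dots> = (\<Sum>j\<le>n. if j = 0 then g j else 0)"
      proof (rule sum.cong)
        fix j
        have "E j = 0 \<longleftrightarrow> j = 0"
        proof
          assume "E j = 0"
          then have "int N * int j * (int j + 1) = 0" unfolding E_def m0 by simp
          then show "j = 0" using Npos by simp
        qed (simp add: E_def m0)
        then show "(if E j = 0 then g j else 0) = (if j = 0 then g j else 0)" by simp
      qed simp
      also have "\<dots> = g 0" by simp
      finally have g0: "g 0 = 0" using FT by simp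
      have "VAL_rep N A = m2add B (m2ct (m2adj B))"
        unfolding VB cone_pt_def m0 by (simp add: m2scale_1)
      moreover have "m2add B (m2ct (m2adj B)) \<in> Sigma_0 f"
        unfolding Sigma_0_def using dB g0 unfolding g_def
        by (intro CollectI exI[of _ B] conjI exI[of _ 1] exI[of _ B]) (auto simp: m2scale_1 proj_eq_refl)
      ultimately show ?thesis by simp
    next
      case mneg
      define q where "q = - m"
      have qpos: "q > 0" unfolding q_def using mneg by simp
      have Eq: "E j = int N * int j * (int j + 1) - (2 * int j + 1) * q" for j
        unfolding E_def q_def by (simp add: algebra_simps)
      have key: "E j - E k = (int j - int k) * (int N * (int j + int k + 1) - 2 * q)" for j k
        unfolding Eq by (simp add: algebra_simps)
      have VB': "VAL_rep N A = cone_pt (real_of_int q / real N) B"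
        unfolding VB q_def by simp
      have dB: "m2det B = 0"
      proof -
        have "m2det A $$ (2 * m) = 0" using d1 mneg by simp
        then show ?thesis using dl by simp
      qed
      have rat: "real_of_rat (of_int q / of_nat N) = real_of_int q / real N"
        by (simp add: of_rat_divide)
      consider (C) j0 where "q = int N * int j0" "1 \<le> j0" "j0 \<le> n"
        | (R2) "int N * int n < q"
        | (R1) j0 where "j0 < n" "int N * int j0 < q" "q < int N * (int j0 + 1)"
      proof -
        have dm: "q = int N * (q div int N) + q mod int N" by simp
        have mb: "0 \<le> q mod int N" "q mod int N < int N" using Npos by auto
        have dv0: "0 \<le> q div int N" using qpos Npos by (simp add: div_int_pos_iff)
        show thesis
        proof (cases "int N * int n < q")
          case True then show thesis using that(2) by blast
        next
          case False
          then have qle: "q \<le> int N * int n" by simp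
          show thesis
          proof (cases "q mod int N = 0")
            case True
            then have qe: "q = int N * (q div int N)" using dm by simp
            have "q div int N \<le> int n"
            proof (rule ccontr)
              assume "\<not> q div int N \<le> int n"
              then have "int n + 1 \<le> q div int N" by simp
              then have "int N * (int n + 1) \<le> int N * (q div int N)" using Npos by (simp add: mult_left_mono)
              then have "int N * (int n + 1) \<le> q" using qe by simp
              then show False using qle Npos by (simp add: algebra_simps)
            qed
            moreover have "1 \<le> q div int N"
            proof (rule ccontr)
              assume "\<not> 1 \<le> q div int N"
              then have "q div int N = 0" using dv0 by simp
              then show False using qe qpos by simp
            qed
            ultimately show thesis using that(1)[of "nat (q div int N)"] qe by simp
          next
            case False
            define j0 where "j0 = nat (q div int N)"
            have j0e: "int j0 = q div int N" unfolding j0_def using dv0 by simp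
            have jj: "int N * int j0 = int N * (q div int N)" using j0e by simp
            have l1: "int N * int j0 < q" using dm mb False jj by linarith
            have "int N * (int j0 + 1) = int N * int j0 + int N" by (simp add: algebra_simps)
            then have l2: "q < int N * (int j0 + 1)" using dm mb jj by linarith
            have "int j0 < int n"
            proof (rule ccontr)
              assume "\<not> int j0 < int n"
              then have "int N * int n \<le> int N * int j0" using Npos by (simp add: mult_left_mono)
              then show False using l1 qle by simp
            qed
            then show thesis using that(3)[of j0] l1 l2 by simp
          qed
        qed
      qed
      then show ?thesis
      proof cases
        case (R2)
        have "\<forall>j\<le>n. E n \<le> E j \<and> (E j = E n \<longrightarrow> j = n)"
        proof (intro allI impI)
          fix j assume "j \<le> n"
          show "E n \<le> E j \<and> (E j = E n \<longrightarrow> j = n)"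
          proof (cases "j = n")
            case False
            then have "int j - int n < 0" using \<open>j \<le> n\<close> by simp
            moreover have "int N * (int j + int n + 1) - 2 * q < 0"
            proof -
              have "int j + int n + 1 \<le> 2 * int n" using False \<open>j \<le> n\<close> by simp
              then have "int N * (int j + int n + 1) \<le> int N * (2 * int n)" by (simp add: mult_left_mono)
              then show ?thesis using R2 by simp
            qed
            ultimately have "E j - E n > 0" unfolding key by (rule mult_neg_neg)
            then show ?thesis by simp
          qed simp
        qed
        then have mn: "\<forall>j\<le>n. E n \<le> E j \<and> (E j = E n \<longrightarrow> j = n)" .
        have "(\<Sum>j\<le>n. if E j = E n then g j else 0) = (\<Sum>j\<le>n. if j = n then g j else 0)"
          by (rule sum.cong) (use mn in auto)
        then have "(\<Sum>j\<le>n. T j) $$ E n = (\<Sum>j\<le>n. if j = n then g j else 0)"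
          using pick_min[OF TE, of "E n"] mn by simp
        then have gn: "g n = 0" using FT by simp
        have "real n < real_of_int q / real N"
        proof -
          have "real_of_int (int N * int n) < real_of_int q" using R2 by linarith
          then have "real N * real n < real_of_int q" by simp
          then show ?thesis using Npos by (simp add: field_simps)
        qed
        then have "VAL_rep N A \<in> Sigma_R n f"
          unfolding Sigma_R_def VB' using gn QB dB rat unfolding g_def Cset_def
          by (intro CollectI exI[of _ "cone_pt (real_of_int q / real N) B"] conjI proj_eq_refl disjI2
              exI[of _ "of_int q / of_nat N"] exI[of _ B]) simp_all
        then show ?thesis by simp
      next
        case (R1 j0)
        have "\<forall>j\<le>n. E j0 \<le> E j \<and> (E j = E j0 \<longrightarrow> j = j0)"
        proof (intro allI impI)
          fix j assume "j \<le> n"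
          show "E j0 \<le> E j \<and> (E j = E j0 \<longrightarrow> j = j0)"
          proof (cases "j < j0")
            case True
            then have "int j - int j0 < 0" by simp
            moreover have "int N * (int j + int j0 + 1) - 2 * q < 0"
            proof -
              have "int j + int j0 + 1 \<le> 2 * int j0" using True by simp
              then have "int N * (int j + int j0 + 1) \<le> int N * (2 * int j0)" by (simp add: mult_left_mono)
              then show ?thesis using R1 by simp
            qed
            ultimately have "E j - E j0 > 0" unfolding key by (rule mult_neg_neg)
            then show ?thesis by simp
          next
            case False
            show ?thesis
            proof (cases "j = j0")
              case False
              then have "int j - int j0 > 0" using \<open>\<not> j < j0\<close> by simp
              moreover have "int N * (int j + int j0 + 1) - 2 * q > 0"
              proof -
                have "2 * (int j0 + 1) \<le> int j + int j0 + 1" using False \<open>\<not> j < j0\<close> by simp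
                then have "int N * (2 * (int j0 + 1)) \<le> int N * (int j + int j0 + 1)" by (simp add: mult_left_mono)
                then show ?thesis using R1 by (simp add: algebra_simps)
              qed
              ultimately have "E j - E j0 > 0" unfolding key by (rule mult_pos_pos)
              then show ?thesis by simp
            qed simp
          qed
        qed
        then have mn: "\<forall>j\<le>n. E j0 \<le> E j \<and> (E j = E j0 \<longrightarrow> j = j0)" .
        have "(\<Sum>j\<le>n. if E j = E j0 then g j else 0) = (\<Sum>j\<le>n. if j = j0 then g j else 0)"
          by (rule sum.cong) (use mn in auto)
        then have "(\<Sum>j\<le>n. T j) $$ E j0 = (\<Sum>j\<le>n. if j = j0 then g j else 0)"
          using pick_min[OF TE, of "E j0"] mn by simp
        then have gj: "g j0 = 0" using FT R1 by simp
        have r1: "real j0 < real_of_int q / real N"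
        proof -
          have "real_of_int (int N * int j0) < real_of_int q" using R1 by linarith
          then have "real N * real j0 < real_of_int q" by simp
          then show ?thesis using Npos by (simp add: field_simps)
        qed
        have r2: "real_of_int q / real N < real j0 + 1"
        proof -
          have "real_of_int q < real_of_int (int N * (int j0 + 1))" using R1 by linarith
          then have "real_of_int q < real N * (real j0 + 1)" by simp
          then show ?thesis using Npos by (simp add: field_simps)
        qed
        have "VAL_rep N A \<in> Sigma_R n f"
          unfolding Sigma_R_def VB' using gj QB dB rat r1 r2 R1 unfolding g_def Cset_def
          by (intro CollectI exI[of _ "cone_pt (real_of_int q / real N) B"] conjI proj_eq_refl disjI1
              exI[of _ j0] exI[of _ "of_int q / of_nat N"] exI[of _ B]) simp_all
        then show ?thesis by simp
      next
        case (C j0)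
        have key2: "E j - E j0 = int N * ((int j - int j0) * ((int j - int j0) + 1))" for j
          unfolding key C(1) by (simp add: algebra_simps)
        have ge: "\<forall>j\<le>n. E j0 \<le> E j"
        proof (intro allI impI)
          fix j
          have "0 \<le> int N * ((int j - int j0) * ((int j - int j0) + 1))"
            using int_cons_nonneg by simp
          then show "E j0 \<le> E j" using key2[of j] by simp
        qed
        have eqiff: "E j = E j0 \<longleftrightarrow> (j = j0 - 1 \<or> j = j0)" for j
        proof
          assume h: "E j = E j0"
          show "j = j0 - 1 \<or> j = j0"
          proof (rule ccontr)
            assume "\<not> (j = j0 - 1 \<or> j = j0)"
            then have "int j - int j0 \<noteq> 0" "int j - int j0 \<noteq> -1" using C(2) by auto
            then have "(int j - int j0) * ((int j - int j0) + 1) > 0" by (rule int_cons_pos)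
            then have "int N * ((int j - int j0) * ((int j - int j0) + 1)) > 0" using Npos by simp
            then show False using key2[of j] h by simp
          qed
        next
          assume "j = j0 - 1 \<or> j = j0"
          then have "int j - int j0 = -1 \<or> int j - int j0 = 0" using C(2) by auto
          then show "E j = E j0" using key2[of j] by auto
        qed
        have "(\<Sum>j\<le>n. T j) $$ E j0 = (\<Sum>j\<le>n. if E j = E j0 then g j else 0)"
          using pick_min[OF TE ge] .
        also have "\<dots> = (\<Sum>j\<le>n. (if j = j0 - 1 then g j else 0) + (if j = j0 then g j else 0))"
        proof (rule sum.cong)
          fix j
          have "j0 - 1 \<noteq> j0" using C(2) by simp
          then show "(if E j = E j0 then g j else 0) = (if j = j0 - 1 then g j else 0) + (if j = j0 then g j else 0)"
            using eqiff[of j] by auto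
        qed simp
        also have "\<dots> = g (j0 - 1) + g j0"
          using C(3) by (simp add: sum.distrib)
        finally have gs: "g (j0 - 1) + g j0 = 0" using FT by simp
        have ex: "real_of_int q / real N = real j0" using C(1) Npos by simp
        have idx: "2 * j0 - 1 = 2 * (j0 - 1) + 1" using C(2) by simp
        have gm: "heval (2 * j0 - 1) id (f (j0 - 1)) B = g (j0 - 1)" unfolding g_def idx ..
        have j0in: "j0 \<in> {1..n}" using C by simp
        show ?thesis
        proof (cases "g j0 = 0")
          case True
          then have "g (j0 - 1) = 0" using gs by simp
          then have "VAL_rep N A \<in> Sigma_C n f"
            unfolding Sigma_C_def VB' ex Cset_def using True gm QB dB j0in unfolding g_def
            by (intro CollectI exI[of _ "cone_pt (real j0) B"] conjI proj_eq_refl bexI[of _ j0] disjI2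
                exI[of _ B]) simp_all
          then show ?thesis by simp
        next
          case False
          then have "g (j0 - 1) \<noteq> 0" using gs by auto
          have "g (j0 - 1) = - g j0" using gs by (simp add: eq_neg_iff_add_eq_0)
          then have q1: "- g (j0 - 1) / g j0 = 1" using False by simp
          have "m2scale (csqrt (- heval (2 * j0 - 1) id (f (j0 - 1)) B / heval (2 * j0 + 1) id (f j0) B)) B = B"
            using q1 gm unfolding g_def by (simp add: m2scale_1)
          then have "VAL_rep N A \<in> Sigma_C n f"
            unfolding Sigma_C_def VB' ex Cset_def using False \<open>g (j0 - 1) \<noteq> 0\<close> gm QB dB j0in unfolding g_def
            by (intro CollectI exI[of _ "cone_pt (real j0) B"] conjI proj_eq_refl bexI[of _ j0] disjI1
                exI[of _ B]) simp_all
          then show ?thesis by simp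
        qed
      qed
    qed
  qed
qed

end
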